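(* Let $I$ and $J$ be finite index sets, let $X=\{x_i\}_{i\in I}$ be a finite set of player types and $Y=\{y_j\}_{j\in J}$ a finite set of strategies. Let $\mu=\{\mu_i\}_{i\in I}$ with $\mu_i\ge 0$ and $\sum_{i\in I}\mu_i=1$ be the given distribution of types. Let $c=\{c_{ij}\}\in\mathbb{R}^{I\times J}$, let each $f_j:\mathbb{R}_+\to\mathbb{R}$ ($j\in J$) be nondecreasing and continuous with primitive $F_j(t)=\int_0^t f_j(s)\,ds$, and let $\phi=\{\phi_{kj}\}\in\mathbb{R}^{J\times J}$ be symmetric. For $\nu\in\mathcal{P}(Y):=\{\nu\in\mathbb{R}_+^J:\sum_{j\in J}\nu_j=1\}$ define the cost $$\Psi_{ij}[\nu]:=c_{ij}+f_j(\nu_j)+\sum_{k\in J}\phi_{kj}\nu_k,$$ the set of transport plans $$\Pi(\mu,\nu):=\Big\{\gamma\in\mathbb{R}_+^{I\times J}:\ \sum_{j\in J}\gamma_{ij}=\mu_i\ \forall i\in I,\ \sum_{i\in I}\gamma_{ij}=\nu_j\ \forall j\in J\Big\},$$ the optimal transport value $\mathrm{MK}(\nu):=\inf_{\gamma\in\Pi(\mu,\nu)}\sum_{i,j}c_{ij}\gamma_{ij}$, and the energy $$E(\nu):=\sum_{j\in J}F_j(\nu_j)+\frac12\sum_{k,j\in J}\phi_{kj}\nu_k\nu_j.$$ Let $\nu$ be a minimizer of $\mathrm{MK}(\nu)+E(\nu)$ over $\nu\in\mathcal{P}(Y)$, and let $\gamma\in\Pi(\mu,\nu)$ satisfy $\sum_{i,j}c_{ij}\gamma_{ij}=\mathrm{MK}(\nu)$.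 Then $\gamma$ is a Cournot-Nash equilibrium, i.e. $\gamma\in\mathbb{R}_+^{I\times J}$, $\sum_{j\in J}\gamma_{ij}=\mu_i$ for all $i\in I$, and, with $\nu_j=\sum_{i\in I}\gamma_{ij}$, for all $(i,j)\in I\times J$, $$\gamma_{ij}>0\ \Longrightarrow\ \Psi_{ij}[\nu]=\min_{k\in J}\Psi_{ik}[\nu].$$ In particular, a Cournot-Nash equilibrium exists.
   Context: A Cournot-Nash equilibrium is a matrix $\gamma\in\mathbb{R}_+^{I\times J}$ ($\gamma_{ij}$ being the probability that a player of type $x_i$ chooses strategy $y_j$) whose first marginal is $\mu$ (i.e. $\sum_{j}\gamma_{ij}=\mu_i$ for all $i$) and such that, denoting by $\nu=\{\sum_i\gamma_{ij}\}_{j\in J}$ its second marginal, $\gamma_{ij}>0$ implies $\Psi_{ij}[\nu]=\min_{k\in J}\Psi_{ik}[\nu]$. *)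

theory Defs
  imports "HOL-Analysis.Analysis"
begin

definition prob_Y :: "('j::finite \<Rightarrow> real) \<Rightarrow> bool" where
  "prob_Y \<nu> \<longleftrightarrow> (\<forall>j. \<nu> j \<ge> 0) \<and> (\<Sum>j\<in>UNIV. \<nu> j) = 1"

definition Psi :: "('i \<Rightarrow> 'j::finite \<Rightarrow> real) \<Rightarrow> ('j \<Rightarrow> real \<Rightarrow> real)
    \<Rightarrow> ('j \<Rightarrow> 'j \<Rightarrow> real) \<Rightarrow> ('j \<Rightarrow> real) \<Rightarrow> 'i \<Rightarrow> 'j \<Rightarrow> real" where
  "Psi c f \<phi> \<nu> i j = c i j + f j (\<nu> j) + (\<Sum>k\<in>UNIV. \<phi> k j * \<nu> k)"

definition plans :: "('i::finite \<Rightarrow> real) \<Rightarrow> ('j::finite \<Rightarrow> real) \<Rightarrow> ('i \<Rightarrow> 'j \<Rightarrow> real) set" where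
  "plans \<mu> \<nu> = {\<gamma>. (\<forall>i j. \<gamma> i j \<ge> 0) \<and> (\<forall>i. (\<Sum>j\<in>UNIV. \<gamma> i j) = \<mu> i)
                    \<and> (\<forall>j. (\<Sum>i\<in>UNIV. \<gamma> i j) = \<nu> j)}"

definition tcost :: "('i::finite \<Rightarrow> 'j::finite \<Rightarrow> real) \<Rightarrow> ('i \<Rightarrow> 'j \<Rightarrow> real) \<Rightarrow> real" where
  "tcost c \<gamma> = (\<Sum>i\<in>UNIV. \<Sum>j\<in>UNIV. c i j * \<gamma> i j)"

definition MK :: "('i::finite \<Rightarrow> real) \<Rightarrow> ('i \<Rightarrow> 'j::finite \<Rightarrow> real) \<Rightarrow> ('j \<Rightarrow> real) \<Rightarrow> real" where
  "MK \<mu> c \<nu> = Inf (tcost c ` plans \<mu> \<nu>)"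

definition Fprim :: "('j \<Rightarrow> real \<Rightarrow> real) \<Rightarrow> 'j \<Rightarrow> real \<Rightarrow> real" where
  "Fprim f j t = integral {0..t} (f j)"

definition energy :: "('j::finite \<Rightarrow> real \<Rightarrow> real) \<Rightarrow> ('j \<Rightarrow> 'j \<Rightarrow> real) \<Rightarrow> ('j \<Rightarrow> real) \<Rightarrow> real" where
  "energy f \<phi> \<nu> = (\<Sum>j\<in>UNIV. Fprim f j (\<nu> j))
                    + 1/2 * (\<Sum>k\<in>UNIV. \<Sum>j\<in>UNIV. \<phi> k j * \<nu> k * \<nu> j)"

definition second_marginal :: "('i::finite \<Rightarrow> 'j \<Rightarrow> real) \<Rightarrow> 'j \<Rightarrow> real" where
  "second_marginal \<gamma> j = (\<Sum>i\<in>UNIV. \<gamma> i j)"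

definition cournot_nash :: "('i::finite \<Rightarrow> real) \<Rightarrow> ('i \<Rightarrow> 'j::finite \<Rightarrow> real)
    \<Rightarrow> ('j \<Rightarrow> real \<Rightarrow> real) \<Rightarrow> ('j \<Rightarrow> 'j \<Rightarrow> real) \<Rightarrow> ('i \<Rightarrow> 'j \<Rightarrow> real) \<Rightarrow> bool" where
  "cournot_nash \<mu> c f \<phi> \<gamma> \<longleftrightarrow>
     (\<forall>i j. \<gamma> i j \<ge> 0) \<and> (\<forall>i. (\<Sum>j\<in>UNIV. \<gamma> i j) = \<mu> i) \<and>
     (\<forall>i j. \<gamma> i j > 0 \<longrightarrow>
        Psi c f \<phi> (second_marginal \<gamma>) i j = Min (range (Psi c f \<phi> (second_marginal \<gamma>) i)))"

end

theory Submission
  imports Defs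
begin

lemma Fprim_up:
  fixes g :: "real \<Rightarrow> real"
  assumes mono: "mono_on {0..} g" and cont: "continuous_on {0..} g"
    and a: "0 \<le> a" and e: "0 \<le> e"
  shows "integral {0..a+e} g - integral {0..a} g \<le> e * g (a+e)"
proof -
  have int: "g integrable_on {0..a+e}"
  proof (rule integrable_continuous_interval, rule continuous_on_subset[OF cont])
    show "{0..a+e} \<subseteq> {0..}" by auto
  qed
  have "integral {0..a} g + integral {a..a+e} g = integral {0..a+e} g"
    using a e int by (intro Henstock_Kurzweil_Integration.integral_combine) auto
  moreover have "integral {a..a+e} g \<le> integral {a..a+e} (\<lambda>_. g (a+e))"
  proof (rule integral_le)
    show "g integrable_on {a..a+e}"
      using int by (rule integrable_subinterval_real) (use a in auto)
    show "(\<lambda>_. g (a+e)) integrable_on {a..a+e}" by (rule Henstock_Kurzweil_Integration.integrable_const_ivl)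
    show "\<And>x. x \<in> {a..a+e} \<Longrightarrow> g x \<le> g (a+e)"
      by (rule mono_onD[OF mono]) (use a e in auto)
  qed
  ultimately show ?thesis using e by simp
qed

lemma Fprim_down:
  fixes g :: "real \<Rightarrow> real"
  assumes mono: "mono_on {0..} g" and cont: "continuous_on {0..} g"
    and a: "e \<le> a" and e: "0 \<le> e"
  shows "integral {0..a-e} g - integral {0..a} g \<le> - e * g (a-e)"
proof -
  have int: "g integrable_on {0..a}"
  proof (rule integrable_continuous_interval, rule continuous_on_subset[OF cont])
    show "{0..a} \<subseteq> {0..}" by auto
  qed
  have "integral {0..a-e} g + integral {a-e..a} g = integral {0..a} g"
    using a e int by (intro Henstock_Kurzweil_Integration.integral_combine) auto
  moreover have "integral {a-e..a} (\<lambda>_. g (a-e)) \<le> integral {a-e..a} g"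
  proof (rule integral_le)
    show "g integrable_on {a-e..a}"
      using int by (rule integrable_subinterval_real) (use a e in auto)
    show "(\<lambda>_. g (a-e)) integrable_on {a-e..a}" by (rule Henstock_Kurzweil_Integration.integrable_const_ivl)
    show "\<And>x. x \<in> {a-e..a} \<Longrightarrow> g (a-e) \<le> g x"
      by (rule mono_onD[OF mono]) (use a e in auto)
  qed
  ultimately show ?thesis using e by simp
qed

definition dlt :: "'j \<Rightarrow> 'j \<Rightarrow> real \<Rightarrow> 'j \<Rightarrow> real" where
  "dlt j k e m = (if m = k then e else 0) - (if m = j then e else 0)"

lemma sum_dlt:
  fixes h :: "'j::finite \<Rightarrow> real"
  shows "(\<Sum>m\<in>UNIV. h m * dlt j k e m) = e * h k - e * h j"
proof -
  have "(\<Sum>m\<in>UNIV. h m * dlt j k e m) = (\<Sum>m\<in>UNIV. (if m = k then e * h k else 0) - (if m = j then e * h j else 0))"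
    by (rule sum.cong) (auto simp: dlt_def algebra_simps)
  also have "\<dots> = e * h k - e * h j" by (simp add: sum_subtractf)
  finally show ?thesis .
qed

lemma sum_dlt1:
  "(\<Sum>m\<in>(UNIV::'j::finite set). dlt j k e m) = 0"
  using sum_dlt[of "\<lambda>_. 1" j k e] by simp

lemma quad_expand:
  fixes \<phi> :: "'j::finite \<Rightarrow> 'j \<Rightarrow> real"
  assumes sym: "\<forall>k j. \<phi> k j = \<phi> j k"
  shows "(\<Sum>k\<in>UNIV. \<Sum>j\<in>UNIV. \<phi> k j * (\<nu> k + d k) * (\<nu> j + d j))
    = (\<Sum>k\<in>UNIV. \<Sum>j\<in>UNIV. \<phi> k j * \<nu> k * \<nu> j)
      + 2 * (\<Sum>m\<in>UNIV. (\<Sum>l\<in>UNIV. \<phi> l m * \<nu> l) * d m)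
      + (\<Sum>k\<in>UNIV. \<Sum>j\<in>UNIV. \<phi> k j * d k * d j)"
proof -
  have e: "\<phi> k j * (\<nu> k + d k) * (\<nu> j + d j) = \<phi> k j * \<nu> k * \<nu> j + \<phi> k j * \<nu> k * d j
     + \<phi> j k * \<nu> j * d k + \<phi> k j * d k * d j" for k j
    using sym by (simp add: algebra_simps)
  have s1: "(\<Sum>k\<in>UNIV. \<Sum>j\<in>UNIV. \<phi> k j * \<nu> k * d j) = (\<Sum>m\<in>UNIV. (\<Sum>l\<in>UNIV. \<phi> l m * \<nu> l) * d m)"
    by (subst sum.swap) (simp add: sum_distrib_right sum_distrib_left mult_ac)
  have s2: "(\<Sum>k\<in>UNIV. \<Sum>j\<in>UNIV. \<phi> j k * \<nu> j * d k) = (\<Sum>m\<in>UNIV. (\<Sum>l\<in>UNIV. \<phi> l m * \<nu> l) * d m)"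
    by (simp add: sum_distrib_right)
  show ?thesis
    by (simp only: e sum.distrib s1 s2)
qed

definition Aset :: "('i::finite \<Rightarrow> real) \<Rightarrow> ('i \<Rightarrow> 'j::finite \<Rightarrow> real) set" where
  "Aset \<mu> = {\<gamma>. (\<forall>i j. \<gamma> i j \<ge> 0) \<and> (\<forall>i. (\<Sum>j\<in>UNIV. \<gamma> i j) = \<mu> i)}"

definition Gfun where
  "Gfun c f \<phi> \<gamma> = tcost c \<gamma> + energy f \<phi> (second_marginal \<gamma>)"

lemma key_step:
  fixes \<mu> :: "'i::finite \<Rightarrow> real"
    and c :: "'i \<Rightarrow> 'j::finite \<Rightarrow> real"
    and f :: "'j \<Rightarrow> real \<Rightarrow> real"
    and \<phi> :: "'j \<Rightarrow> 'j \<Rightarrow> real"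
  assumes f_mono: "\<forall>j. mono_on {0..} (f j)"
    and f_cont: "\<forall>j. continuous_on {0..} (f j)"
    and phi_sym: "\<forall>k j. \<phi> k j = \<phi> j k"
    and gA: "\<gamma> \<in> Aset \<mu>"
    and gmin: "\<forall>\<gamma>'\<in>Aset \<mu>. Gfun c f \<phi> \<gamma> \<le> Gfun c f \<phi> \<gamma>'"
    and jk: "j \<noteq> k"
    and e0: "0 < e" and e1: "e \<le> \<gamma> i j"
  shows "0 \<le> (c i k - c i j) + f k (second_marginal \<gamma> k + e) - f j (second_marginal \<gamma> j - e)
           + ((\<Sum>l\<in>UNIV. \<phi> l k * second_marginal \<gamma> l) - (\<Sum>l\<in>UNIV. \<phi> l j * second_marginal \<gamma> l))
           + e * ((\<phi> k k + \<phi> j j - 2 * \<phi> j k) / 2)"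
proof -
  define \<nu> where "\<nu> = second_marginal \<gamma>"
  define d where "d = dlt j k e"
  define a where "a m = (\<Sum>l\<in>UNIV. \<phi> l m * \<nu> l)" for m
  define \<gamma>' where "\<gamma>' = (\<lambda>i' j'. \<gamma> i' j' + (if i' = i then d j' else 0))"
  have gnn: "\<gamma> i' j' \<ge> 0" for i' j' using gA by (auto simp: Aset_def)
  have grow: "(\<Sum>j'\<in>UNIV. \<gamma> i' j') = \<mu> i'" for i' using gA by (auto simp: Aset_def)
  have nunn: "\<nu> m \<ge> 0" for m unfolding \<nu>_def second_marginal_def using gnn by (simp add: sum_nonneg)
  have nuj: "\<gamma> i j \<le> \<nu> j" unfolding \<nu>_def second_marginal_def
    using gnn by (intro member_le_sum) auto
  have g'A: "\<gamma>' \<in> Aset \<mu>"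
  proof -
    have "\<gamma>' i' j' \<ge> 0" for i' j'
      using gnn[of i' j'] e0 e1 jk by (auto simp: \<gamma>'_def d_def dlt_def)
    moreover have "(\<Sum>j'\<in>UNIV. \<gamma>' i' j') = \<mu> i'" for i'
      using grow[of i'] sum_dlt1[of j k e] by (cases "i' = i") (auto simp: \<gamma>'_def sum.distrib d_def)
    ultimately show ?thesis by (auto simp: Aset_def)
  qed
  have sm: "second_marginal \<gamma>' = (\<lambda>m. \<nu> m + d m)"
    unfolding fun_eq_iff \<gamma>'_def \<nu>_def second_marginal_def by (simp add: sum.distrib)
  have tc: "tcost c \<gamma>' = tcost c \<gamma> + (e * c i k - e * c i j)"
  proof -
    have "tcost c \<gamma>' = tcost c \<gamma> + (\<Sum>i'\<in>UNIV. \<Sum>j'\<in>UNIV. c i' j' * (if i' = i then d j' else 0))"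
      by (simp add: tcost_def \<gamma>'_def algebra_simps sum.distrib)
    also have "(\<Sum>i'\<in>UNIV. \<Sum>j'\<in>UNIV. c i' j' * (if i' = i then d j' else 0))
        = (\<Sum>i'\<in>UNIV. if i' = i then (\<Sum>j'\<in>UNIV. c i j' * d j') else 0)"
      by (rule sum.cong) auto
    also have "\<dots> = e * c i k - e * c i j" using sum_dlt[of "c i" j k e] by (simp add: d_def)
    finally show ?thesis .
  qed
  define F where "F l t = Fprim f l t" for l t
  have Fp: "(\<Sum>l\<in>UNIV. F l (\<nu> l + d l)) = (\<Sum>l\<in>UNIV. F l (\<nu> l))
       + ((F k (\<nu> k + e) - F k (\<nu> k)) + (F j (\<nu> j - e) - F j (\<nu> j)))"
  proof -
    have "F l (\<nu> l + d l) = F l (\<nu> l) + ((if l = k then F k (\<nu> k + e) - F k (\<nu> k) else 0)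
        + (if l = j then F j (\<nu> j - e) - F j (\<nu> j) else 0))" for l
      using jk by (auto simp: d_def dlt_def)
    then have "(\<Sum>l\<in>UNIV. F l (\<nu> l + d l)) = (\<Sum>l\<in>UNIV. F l (\<nu> l) + ((if l = k then F k (\<nu> k + e) - F k (\<nu> k) else 0)
        + (if l = j then F j (\<nu> j - e) - F j (\<nu> j) else 0)))" by (intro sum.cong) auto
    then show ?thesis by (simp add: sum.distrib)
  qed
  have Q: "(\<Sum>k'\<in>UNIV. \<Sum>j'\<in>UNIV. \<phi> k' j' * (\<nu> k' + d k') * (\<nu> j' + d j'))
    = (\<Sum>k'\<in>UNIV. \<Sum>j'\<in>UNIV. \<phi> k' j' * \<nu> k' * \<nu> j')
      + 2 * (e * a k - e * a j) + e * e * (\<phi> k k + \<phi> j j - 2 * \<phi> j k)"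
  proof -
    have 1: "(\<Sum>m\<in>UNIV. (\<Sum>l\<in>UNIV. \<phi> l m * \<nu> l) * d m) = e * a k - e * a j"
      using sum_dlt[of a j k e] by (simp add: a_def d_def)
    have 2: "(\<Sum>k'\<in>UNIV. \<Sum>j'\<in>UNIV. \<phi> k' j' * d k' * d j') = e * e * (\<phi> k k + \<phi> j j - 2 * \<phi> j k)"
    proof -
      have "(\<Sum>j'\<in>UNIV. \<phi> k' j' * d k' * d j') = (\<phi> k' k * e - \<phi> k' j * e) * d k'" for k'
        using sum_dlt[of "\<lambda>j'. \<phi> k' j' * d k'" j k e] by (simp add: d_def algebra_simps)
      then have "(\<Sum>k'\<in>UNIV. \<Sum>j'\<in>UNIV. \<phi> k' j' * d k' * d j') = (\<Sum>k'\<in>UNIV. (\<phi> k' k * e - \<phi> k' j * e) * d k')"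
        by simp
      also have "\<dots> = e * (\<phi> k k * e - \<phi> k j * e) - e * (\<phi> j k * e - \<phi> j j * e)"
        using sum_dlt[of "\<lambda>k'. \<phi> k' k * e - \<phi> k' j * e" j k e] by (simp add: d_def)
      finally show ?thesis using phi_sym by (simp add: algebra_simps)
    qed
    show ?thesis using quad_expand[OF phi_sym, of \<nu> d] 1 2 by simp
  qed
  have Gle: "Gfun c f \<phi> \<gamma> \<le> Gfun c f \<phi> \<gamma>'" using gmin g'A by auto
  have Gdiff: "Gfun c f \<phi> \<gamma>' = Gfun c f \<phi> \<gamma> + (e * c i k - e * c i j)
      + ((F k (\<nu> k + e) - F k (\<nu> k)) + (F j (\<nu> j - e) - F j (\<nu> j)))
      + (e * a k - e * a j) + e * e * ((\<phi> k k + \<phi> j j - 2 * \<phi> j k) / 2)"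
  proof -
    have E1: "energy f \<phi> (\<lambda>m. \<nu> m + d m) = (\<Sum>l\<in>UNIV. F l (\<nu> l + d l))
       + 1/2 * (\<Sum>k'\<in>UNIV. \<Sum>j'\<in>UNIV. \<phi> k' j' * (\<nu> k' + d k') * (\<nu> j' + d j'))"
      by (simp add: energy_def F_def)
    have E0: "energy f \<phi> \<nu> = (\<Sum>l\<in>UNIV. F l (\<nu> l))
       + 1/2 * (\<Sum>k'\<in>UNIV. \<Sum>j'\<in>UNIV. \<phi> k' j' * \<nu> k' * \<nu> j')"
      by (simp add: energy_def F_def)
    show ?thesis
      unfolding Gfun_def sm tc \<nu>_def[symmetric]
      by (simp only: E1 E0 Fp Q) (simp add: algebra_simps add_divide_distrib diff_divide_distrib)
  qed
  have b1: "F k (\<nu> k + e) - F k (\<nu> k) \<le> e * f k (\<nu> k + e)"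
    unfolding F_def Fprim_def using Fprim_up[of "f k" "\<nu> k" e] f_mono f_cont nunn e0 by auto
  have b2: "F j (\<nu> j - e) - F j (\<nu> j) \<le> - e * f j (\<nu> j - e)"
    unfolding F_def Fprim_def using Fprim_down[of "f j" e "\<nu> j"] f_mono f_cont nuj e0 e1 by auto
  have "0 \<le> e * ((c i k - c i j) + f k (\<nu> k + e) - f j (\<nu> j - e) + (a k - a j)
           + e * ((\<phi> k k + \<phi> j j - 2 * \<phi> j k) / 2))"
    using Gle Gdiff b1 b2 by (simp add: algebra_simps)
  then have "0 \<le> (c i k - c i j) + f k (\<nu> k + e) - f j (\<nu> j - e) + (a k - a j)
           + e * ((\<phi> k k + \<phi> j j - 2 * \<phi> j k) / 2)"
    using e0 by (simp add: zero_le_mult_iff)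
  then show ?thesis by (simp add: a_def \<nu>_def)
qed

lemma psi_le:
  fixes \<mu> :: "'i::finite \<Rightarrow> real"
    and c :: "'i \<Rightarrow> 'j::finite \<Rightarrow> real"
    and f :: "'j \<Rightarrow> real \<Rightarrow> real"
    and \<phi> :: "'j \<Rightarrow> 'j \<Rightarrow> real"
  assumes f_mono: "\<forall>j. mono_on {0..} (f j)"
    and f_cont: "\<forall>j. continuous_on {0..} (f j)"
    and phi_sym: "\<forall>k j. \<phi> k j = \<phi> j k"
    and gA: "\<gamma> \<in> Aset \<mu>"
    and gmin: "\<forall>\<gamma>'\<in>Aset \<mu>. Gfun c f \<phi> \<gamma> \<le> Gfun c f \<phi> \<gamma>'"
    and pos: "\<gamma> i j > 0"
  shows "Psi c f \<phi> (second_marginal \<gamma>) i j \<le> Psi c f \<phi> (second_marginal \<gamma>) i k"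
proof (cases "j = k")
  case True then show ?thesis by simp
next
  case jk: False
  define \<nu> where "\<nu> = second_marginal \<gamma>"
  define C where "C = (\<phi> k k + \<phi> j j - 2 * \<phi> j k) / 2"
  define K where "K = (c i k - c i j) + ((\<Sum>l\<in>UNIV. \<phi> l k * \<nu> l) - (\<Sum>l\<in>UNIV. \<phi> l j * \<nu> l))"
  define s where "s n = \<gamma> i j / real (Suc n)" for n
  have gnn: "\<gamma> i' j' \<ge> 0" for i' j' using gA by (auto simp: Aset_def)
  have nunn: "\<nu> m \<ge> 0" for m unfolding \<nu>_def second_marginal_def using gnn by (simp add: sum_nonneg)
  have nuj: "\<gamma> i j \<le> \<nu> j" unfolding \<nu>_def second_marginal_def
    using gnn by (intro member_le_sum) auto
  have s0: "0 < s n" for n using pos by (simp add: s_def)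
  have s1: "s n \<le> \<gamma> i j" for n
    using pos by (simp add: s_def divide_le_eq)
  have st: "s \<longlonglongrightarrow> 0"
  proof -
    have "(\<lambda>n. \<gamma> i j * inverse (real (Suc n))) \<longlonglongrightarrow> \<gamma> i j * 0"
      by (intro tendsto_intros LIMSEQ_inverse_real_of_nat)
    moreover have "s = (\<lambda>n. \<gamma> i j * inverse (real (Suc n)))"
      by (simp add: fun_eq_iff s_def divide_inverse)
    ultimately show ?thesis by simp
  qed
  have ineq: "0 \<le> K + f k (\<nu> k + s n) - f j (\<nu> j - s n) + s n * C" for n
    using key_step[OF f_mono f_cont phi_sym gA gmin jk s0[of n] s1[of n]]
    by (simp add: K_def C_def \<nu>_def algebra_simps)
  have l1: "(\<lambda>n. f k (\<nu> k + s n)) \<longlonglongrightarrow> f k (\<nu> k + 0)"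
  proof (rule continuous_on_tendsto_compose[of "{0..}" "f k" "\<lambda>n. \<nu> k + s n" "\<nu> k + 0" sequentially])
    show "continuous_on {0..} (f k)" using f_cont by simp
    show "(\<lambda>n. \<nu> k + s n) \<longlonglongrightarrow> \<nu> k + 0" by (intro tendsto_intros st)
    show "\<nu> k + 0 \<in> {0..}" using nunn by simp
    show "\<forall>\<^sub>F n in sequentially. \<nu> k + s n \<in> {0..}"
      using nunn s0 by (intro always_eventually) (simp add: add_nonneg_nonneg less_imp_le)
  qed
  have l2: "(\<lambda>n. f j (\<nu> j - s n)) \<longlonglongrightarrow> f j (\<nu> j - 0)"
  proof (rule continuous_on_tendsto_compose[of "{0..}" "f j" "\<lambda>n. \<nu> j - s n" "\<nu> j - 0" sequentially])
    show "continuous_on {0..} (f j)" using f_cont by simp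
    show "(\<lambda>n. \<nu> j - s n) \<longlonglongrightarrow> \<nu> j - 0" by (intro tendsto_intros st)
    show "\<nu> j - 0 \<in> {0..}" using nunn by simp
    show "\<forall>\<^sub>F n in sequentially. \<nu> j - s n \<in> {0..}"
      using s1 nuj by (intro always_eventually) (auto intro: order_trans)
  qed
  have "(\<lambda>n. K + f k (\<nu> k + s n) - f j (\<nu> j - s n) + s n * C) \<longlonglongrightarrow> K + f k (\<nu> k + 0) - f j (\<nu> j - 0) + 0 * C"
    by (intro tendsto_intros l1 l2 st)
  then have "0 \<le> K + f k (\<nu> k + 0) - f j (\<nu> j - 0) + 0 * C"
    by (rule LIMSEQ_le_const) (use ineq in blast)
  then have "0 \<le> K + f k (\<nu> k) - f j (\<nu> j)" by simp
  then show ?thesis by (simp add: Psi_def K_def \<nu>_def)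
qed

lemma cn_of_min:
  fixes \<mu> :: "'i::finite \<Rightarrow> real"
    and c :: "'i \<Rightarrow> 'j::finite \<Rightarrow> real"
    and f :: "'j \<Rightarrow> real \<Rightarrow> real"
    and \<phi> :: "'j \<Rightarrow> 'j \<Rightarrow> real"
  assumes f_mono: "\<forall>j. mono_on {0..} (f j)"
    and f_cont: "\<forall>j. continuous_on {0..} (f j)"
    and phi_sym: "\<forall>k j. \<phi> k j = \<phi> j k"
    and gA: "\<gamma> \<in> Aset \<mu>"
    and gmin: "\<forall>\<gamma>'\<in>Aset \<mu>. Gfun c f \<phi> \<gamma> \<le> Gfun c f \<phi> \<gamma>'"
  shows "cournot_nash \<mu> c f \<phi> \<gamma>"
  unfolding cournot_nash_def
proof (intro conjI allI impI)
  show "0 \<le> \<gamma> i j" for i j using gA by (auto simp: Aset_def)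
  show "(\<Sum>j\<in>UNIV. \<gamma> i j) = \<mu> i" for i using gA by (auto simp: Aset_def)
  fix i j assume "0 < \<gamma> i j"
  then show "Psi c f \<phi> (second_marginal \<gamma>) i j = Min (range (Psi c f \<phi> (second_marginal \<gamma>) i))"
    using psi_le[OF f_mono f_cont phi_sym gA gmin] by (intro Min_eqI[symmetric]) auto
qed

lemma cont_app [continuous_intros]:
  "continuous_on S (\<lambda>\<gamma>::'b \<Rightarrow> 'c \<Rightarrow> real. \<gamma> i j)"
proof -
  have "continuous_on UNIV (\<lambda>\<gamma>::'b \<Rightarrow> 'c \<Rightarrow> real. \<gamma> i)" by simp
  then have "continuous_on UNIV (\<lambda>\<gamma>::'b \<Rightarrow> 'c \<Rightarrow> real. \<gamma> i j)"
    by (rule continuous_on_product_then_coordinatewise)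
  then show ?thesis using continuous_on_subset by blast
qed

lemma compact_PiE_UNIV:
  fixes S :: "'a \<Rightarrow> 'b::topological_space set"
  assumes "\<And>i. compact (S i)"
  shows "compact (PiE UNIV S)"
  using compactin_PiE[of "\<lambda>i. euclidean" UNIV S] assms by (simp add: euclidean_product_topology)

lemma Aset_bounds:
  fixes \<mu> :: "'i::finite \<Rightarrow> real"
  assumes mu_nonneg: "\<forall>i. \<mu> i \<ge> 0" and mu_sum: "(\<Sum>i\<in>UNIV. \<mu> i) = 1"
    and g: "\<forall>i j. \<gamma> i j \<ge> 0" "\<forall>i. (\<Sum>j\<in>UNIV. \<gamma> i (j::'j::finite)) = \<mu> i"
  shows "\<gamma> i j \<le> 1" "second_marginal \<gamma> j \<le> 1" "second_marginal \<gamma> j \<ge> 0"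
proof -
  have "\<gamma> i j \<le> (\<Sum>j\<in>UNIV. \<gamma> i j)" using g by (intro member_le_sum) auto
  also have "\<dots> = \<mu> i" using g by auto
  also have "\<dots> \<le> (\<Sum>i\<in>UNIV. \<mu> i)" using mu_nonneg by (intro member_le_sum) auto
  finally show "\<gamma> i j \<le> 1" using mu_sum by simp
  have "second_marginal \<gamma> j \<le> (\<Sum>i\<in>UNIV. \<Sum>j\<in>UNIV. \<gamma> i j)"
    unfolding second_marginal_def using g by (intro sum_mono member_le_sum) auto
  also have "\<dots> = 1" using g mu_sum by simp
  finally show "second_marginal \<gamma> j \<le> 1" .
  show "second_marginal \<gamma> j \<ge> 0" unfolding second_marginal_def using g by (simp add: sum_nonneg)
qed

lemma exists_min:
  fixes \<mu> :: "'i::finite \<Rightarrow> real"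
    and c :: "'i \<Rightarrow> 'j::finite \<Rightarrow> real"
    and f :: "'j \<Rightarrow> real \<Rightarrow> real"
    and \<phi> :: "'j \<Rightarrow> 'j \<Rightarrow> real"
  assumes mu_nonneg: "\<forall>i. \<mu> i \<ge> 0"
    and mu_sum: "(\<Sum>i\<in>UNIV. \<mu> i) = 1"
    and f_cont: "\<forall>j. continuous_on {0..} (f j)"
  shows "\<exists>\<gamma>\<in>Aset \<mu>. \<forall>\<gamma>'\<in>Aset \<mu>. Gfun c f \<phi> \<gamma> \<le> Gfun c f \<phi> \<gamma>'"
proof (rule continuous_attains_inf)
  define K :: "('i \<Rightarrow> 'j \<Rightarrow> real) set" where "K = PiE UNIV (\<lambda>i. PiE UNIV (\<lambda>j. {0..1}))"
  have cK: "compact K" unfolding K_def by (intro compact_PiE_UNIV compact_Icc)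
  have cl: "closed (Aset \<mu>)"
  proof -
    have "Aset \<mu> = (\<Inter>i. \<Inter>j. {\<gamma>. (\<lambda>_. 0) \<gamma> \<le> (\<lambda>\<gamma>. \<gamma> i j) \<gamma>}) \<inter> (\<Inter>i. {\<gamma>. (\<lambda>\<gamma>. \<Sum>j\<in>UNIV. \<gamma> i j) \<gamma> = (\<lambda>_. \<mu> i) \<gamma>})"
      by (auto simp: Aset_def)
    also have "closed \<dots>"
      by (intro closed_Int closed_INT ballI closed_Collect_le closed_Collect_eq continuous_intros
          continuous_on_id)
    finally show ?thesis .
  qed
  have sub: "Aset \<mu> \<subseteq> K"
    using Aset_bounds(1)[OF mu_nonneg mu_sum] by (auto simp: Aset_def K_def)
  have "compact (K \<inter> Aset \<mu>)" using cK cl by blast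
  moreover have "K \<inter> Aset \<mu> = Aset \<mu>" using sub by blast
  ultimately show "compact (Aset \<mu> :: ('i \<Rightarrow> 'j \<Rightarrow> real) set)" by simp
  show "(Aset \<mu> :: ('i \<Rightarrow> 'j \<Rightarrow> real) set) \<noteq> {}"
  proof -
    have "(\<lambda>i (j::'j). \<mu> i / real CARD('j)) \<in> Aset \<mu>"
      using mu_nonneg by (auto simp: Aset_def)
    then show ?thesis by blast
  qed
  show "continuous_on (Aset \<mu>) (Gfun c f \<phi>)"
  proof -
    have cF: "continuous_on {0..1} (Fprim f j)" for j
    proof -
      have "continuous_on {0..1} (f j)" using f_cont continuous_on_subset[of "{0..}" "f j" "{0..1}"] by auto
      then have "f j integrable_on {0..1}" by (rule integrable_continuous_interval)
      then show ?thesis unfolding Fprim_def[abs_def] by (rule indefinite_integral_continuous_1)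
    qed
    have cm: "continuous_on (Aset \<mu>) (\<lambda>\<gamma>. second_marginal \<gamma> j)" for j
      unfolding second_marginal_def by (intro continuous_intros)
    have cFm: "continuous_on (Aset \<mu>) (\<lambda>\<gamma>. Fprim f j (second_marginal \<gamma> j))" for j
    proof (rule continuous_on_compose2[OF cF cm])
      show "(\<lambda>\<gamma>. second_marginal \<gamma> j) ` Aset \<mu> \<subseteq> {0..1}"
        using Aset_bounds(2,3)[OF mu_nonneg mu_sum] by (auto simp: Aset_def)
    qed
    show ?thesis
      unfolding Gfun_def[abs_def] energy_def tcost_def
      by (intro continuous_intros cFm cm)
  qed
qed

theorem mainTheorem1:
  fixes \<mu> :: "'i::finite \<Rightarrow> real"
    and c :: "'i \<Rightarrow> 'j::finite \<Rightarrow> real"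
    and f :: "'j \<Rightarrow> real \<Rightarrow> real"
    and \<phi> :: "'j \<Rightarrow> 'j \<Rightarrow> real"
  assumes mu_nonneg: "\<forall>i. \<mu> i \<ge> 0"
    and mu_sum: "(\<Sum>i\<in>UNIV. \<mu> i) = 1"
    and f_mono: "\<forall>j. mono_on {0..} (f j)"
    and f_cont: "\<forall>j. continuous_on {0..} (f j)"
    and phi_sym: "\<forall>k j. \<phi> k j = \<phi> j k"
  shows "(\<forall>\<nu> \<gamma>. prob_Y \<nu>
            \<and> (\<forall>\<nu>'. prob_Y \<nu>' \<longrightarrow> MK \<mu> c \<nu> + energy f \<phi> \<nu> \<le> MK \<mu> c \<nu>' + energy f \<phi> \<nu>')
            \<and> \<gamma> \<in> plans \<mu> \<nu> \<and> tcost c \<gamma> = MK \<mu> c \<nu>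
          \<longrightarrow> cournot_nash \<mu> c f \<phi> \<gamma>)
         \<and> (\<exists>\<gamma>. cournot_nash \<mu> c f \<phi> \<gamma>)"
proof (intro conjI allI impI)
  fix \<nu> :: "'j \<Rightarrow> real" and \<gamma> :: "'i \<Rightarrow> 'j \<Rightarrow> real"
  assume H: "prob_Y \<nu>
            \<and> (\<forall>\<nu>'. prob_Y \<nu>' \<longrightarrow> MK \<mu> c \<nu> + energy f \<phi> \<nu> \<le> MK \<mu> c \<nu>' + energy f \<phi> \<nu>')
            \<and> \<gamma> \<in> plans \<mu> \<nu> \<and> tcost c \<gamma> = MK \<mu> c \<nu>"
  then have nmin: "\<And>\<nu>'. prob_Y \<nu>' \<Longrightarrow> MK \<mu> c \<nu> + energy f \<phi> \<nu> \<le> MK \<mu> c \<nu>' + energy f \<phi> \<nu>'"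
    and gp: "\<gamma> \<in> plans \<mu> \<nu>" and gt: "tcost c \<gamma> = MK \<mu> c \<nu>" by auto
  have sm: "second_marginal \<gamma> = \<nu>" using gp by (auto simp: plans_def second_marginal_def fun_eq_iff)
  have gA: "\<gamma> \<in> Aset \<mu>" using gp by (auto simp: plans_def Aset_def)
  define B where "B = (\<Sum>i\<in>UNIV. \<Sum>j\<in>UNIV. \<bar>c i j\<bar>)"
  have gmin: "\<forall>\<gamma>'\<in>Aset \<mu>. Gfun c f \<phi> \<gamma> \<le> Gfun c f \<phi> \<gamma>'"
  proof
    fix \<gamma>' :: "'i \<Rightarrow> 'j \<Rightarrow> real" assume g'A: "\<gamma>' \<in> Aset \<mu>"
    define \<nu>' where "\<nu>' = second_marginal \<gamma>'"
    have g'nn: "\<forall>i j. \<gamma>' i j \<ge> 0" and g'r: "\<forall>i. (\<Sum>j\<in>UNIV. \<gamma>' i j) = \<mu> i"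
      using g'A by (auto simp: Aset_def)
    have pY: "prob_Y \<nu>'"
    proof -
      have "(\<Sum>j\<in>UNIV. \<nu>' j) = (\<Sum>i\<in>UNIV. \<Sum>j\<in>UNIV. \<gamma>' i j)"
        unfolding \<nu>'_def second_marginal_def by (rule sum.swap)
      also have "\<dots> = 1" using g'r mu_sum by simp
      finally show ?thesis unfolding prob_Y_def
        using Aset_bounds(3)[OF mu_nonneg mu_sum g'nn g'r] by (simp add: \<nu>'_def)
    qed
    have g'p: "\<gamma>' \<in> plans \<mu> \<nu>'" using g'nn g'r by (auto simp: plans_def \<nu>'_def second_marginal_def)
    have bdd: "bdd_below (tcost c ` plans \<mu> \<nu>')"
    proof (rule bdd_belowI2)
      fix g assume gpl: "g \<in> plans \<mu> \<nu>'"
      then have gnn: "\<forall>i j. g i j \<ge> 0" and gr: "\<forall>i. (\<Sum>j\<in>UNIV. g i j) = \<mu> i"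
        by (auto simp: plans_def)
      have "c i j * g i j \<ge> - \<bar>c i j\<bar>" for i j
      proof -
        have "g i j \<le> 1" using Aset_bounds(1)[OF mu_nonneg mu_sum gnn gr] .
        then have "\<bar>c i j\<bar> * g i j \<le> \<bar>c i j\<bar>" using gnn by (simp add: mult_left_le)
        moreover have "- (\<bar>c i j\<bar> * g i j) \<le> c i j * g i j" using gnn
          by (metis abs_ge_minus_self abs_mult abs_of_nonneg minus_le_iff)
        ultimately show ?thesis by linarith
      qed
      then have "(\<Sum>i\<in>UNIV. \<Sum>j\<in>UNIV. - \<bar>c i j\<bar>) \<le> tcost c g"
        unfolding tcost_def by (intro sum_mono) auto
      then show "- B \<le> tcost c g" by (simp add: B_def sum_negf)
    qed
    have "MK \<mu> c \<nu>' \<le> tcost c \<gamma>'" unfolding MK_def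
      by (rule cInf_lower) (use g'p bdd in auto)
    then show "Gfun c f \<phi> \<gamma> \<le> Gfun c f \<phi> \<gamma>'"
      using nmin[OF pY] gt sm by (simp add: Gfun_def \<nu>'_def)
  qed
  show "cournot_nash \<mu> c f \<phi> \<gamma>" by (rule cn_of_min[OF f_mono f_cont phi_sym gA gmin])
next
  obtain \<gamma> :: "'i \<Rightarrow> 'j \<Rightarrow> real" where "\<gamma> \<in> Aset \<mu>" "\<forall>\<gamma>'\<in>Aset \<mu>. Gfun c f \<phi> \<gamma> \<le> Gfun c f \<phi> \<gamma>'"
    using exists_min[OF mu_nonneg mu_sum f_cont, of c \<phi>] by blast
  then show "\<exists>\<gamma>. cournot_nash \<mu> c f \<phi> \<gamma>" using cn_of_min[OF f_mono f_cont phi_sym] by blast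
qed

end
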